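(* For every integer $r$ there exists an integer $k=k(r)$ such that the following holds. If $G$ is a graph whose neighborhood complexity satisfies $\eta_G(m)\le r\cdot m$ for every positive integer $m$, then the vertices of $G$ can be (not necessarily properly) colored with $k$ colors such that for every non-isolated vertex $v$ of $G$ there exists a color which appears on an odd number of vertices of the open neighborhood $N(v)$.
   Context: All graphs are finite and simple. $N(v)$ denotes the open neighborhood of $v$ (not containing $v$). The neighborhood complexity of a graph $G$ is the function $\eta_G(m)=\max_{A}|\{N(v)\cap A : v\in V(G)\}|$, where the maximum is over all $m$-element subsets $A\subseteq V(G)$. *)

theory Defs
  imports Main
begin

definition simple_graph :: "'a set \<Rightarrow> ('a \<Rightarrow> 'a \<Rightarrow> bool) \<Rightarrow> bool" where
  "simple_graph V E \<longleftrightarrow> finite V \<and> (\<forall>u v. E u v \<longrightarrow> E v u)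
     \<and> (\<forall>v. \<not> E v v) \<and> (\<forall>u v. E u v \<longrightarrow> u \<in> V \<and> v \<in> V)"

definition nbhd :: "'a set \<Rightarrow> ('a \<Rightarrow> 'a \<Rightarrow> bool) \<Rightarrow> 'a \<Rightarrow> 'a set" where
  "nbhd V E v = {u \<in> V. E v u}"

text \<open>Neighbourhood complexity: maximum over m-element subsets A of V of the
number of distinct traces N(v) \<inter> A, v \<in> V (0 if there is no such A).\<close>
definition nbhd_complexity :: "'a set \<Rightarrow> ('a \<Rightarrow> 'a \<Rightarrow> bool) \<Rightarrow> nat \<Rightarrow> nat" where
  "nbhd_complexity V E m =
     Sup {card ((\<lambda>v. nbhd V E v \<inter> A) ` V) | A. A \<subseteq> V \<and> card A = m}"

end

theory Submission
  imports Defs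
begin


definition Ed :: "'b set set \<Rightarrow> ('b set \<times> 'b) set" where
  "Ed H = {(T,p). T \<in> H \<and> p \<notin> T \<and> insert p T \<in> H}"

definition shatters :: "'b set set \<Rightarrow> 'b set \<Rightarrow> bool" where
  "shatters H B \<longleftrightarrow> Pow B \<subseteq> (\<lambda>T. T \<inter> B) ` H"

lemma image_minus_split: "(\<lambda>T. T - {a}) ` H = {T \<in> H. a \<notin> T} \<union> (\<lambda>T. T - {a}) ` {T \<in> H. a \<in> T}"
proof -
  have "H = {T \<in> H. a \<notin> T} \<union> {T \<in> H. a \<in> T}" by blast
  then have "(\<lambda>T. T - {a}) ` H = (\<lambda>T. T - {a}) ` {T \<in> H. a \<notin> T} \<union> (\<lambda>T. T - {a}) ` {T \<in> H. a \<in> T}"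
    by (metis image_Un)
  moreover have "(\<lambda>T. T - {a}) ` {T \<in> H. a \<notin> T} = (\<lambda>T. T) ` {T \<in> H. a \<notin> T}"
    by (rule image_cong) auto
  ultimately show ?thesis by simp
qed

lemma Ed_finite: "finite A \<Longrightarrow> H \<subseteq> Pow A \<Longrightarrow> finite (Ed H)"
proof -
  assume "finite A" "H \<subseteq> Pow A"
  then have "finite (H \<times> A)" by (meson finite_Pow_iff finite_SigmaI finite_subset)
  moreover have "Ed H \<subseteq> H \<times> A" using \<open>H \<subseteq> Pow A\<close> unfolding Ed_def by auto
  ultimately show ?thesis using finite_subset by blast
qed

lemma edge_bound:
  assumes "finite A"
  shows "H \<subseteq> Pow A \<Longrightarrow> (\<forall>B\<subseteq>A. shatters H B \<longrightarrow> card B \<le> d) \<Longrightarrow> card (Ed H) \<le> d * card H"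
  using assms
proof (induction A arbitrary: H d rule: finite_induct)
  case empty
  then have "Ed H = {}" unfolding Ed_def by auto
  then show ?case by simp
next
  case (insert a A0 H d)
  define H1 where "H1 = (\<lambda>T. T - {a}) ` H"
  define H2 where "H2 = {T \<in> H. a \<notin> T \<and> insert a T \<in> H}"
  have finH: "finite H" using insert.prems(1) insert.hyps(1)
    by (meson finite_Pow_iff finite_insert finite_subset)
  have H1sub: "H1 \<subseteq> Pow A0" using insert.prems(1) unfolding H1_def by auto
  have H2sub: "H2 \<subseteq> Pow A0" using insert.prems(1) unfolding H2_def by auto
  define Ha where "Ha = {T \<in> H. a \<in> T}"
  define Hn where "Hn = {T \<in> H. a \<notin> T}"
  have H1eq: "H1 = Hn \<union> (\<lambda>T. T - {a}) ` Ha"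
    unfolding H1_def Ha_def Hn_def by (rule image_minus_split)
  have injHa: "inj_on (\<lambda>T. T - {a}) Ha" unfolding Ha_def inj_on_def by (metis (mono_tags, lifting) insert_Diff mem_Collect_eq)
  have intH: "Hn \<inter> (\<lambda>T. T - {a}) ` Ha = H2"
  proof
    show "Hn \<inter> (\<lambda>T. T - {a}) ` Ha \<subseteq> H2"
    proof
      fix T assume A: "T \<in> Hn \<inter> (\<lambda>T. T - {a}) ` Ha"
      then have "T \<in> H" "a \<notin> T" unfolding Hn_def by simp_all
      from A have "T \<in> (\<lambda>T. T - {a}) ` Ha" by simp
      then obtain T' where T': "T' \<in> Ha" "T = T' - {a}" by (rule imageE)
      then have "T' \<in> H" "a \<in> T'" unfolding Ha_def by simp_all
      then have "insert a T = T'" unfolding T'(2) by (simp add: insert_absorb)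
      then show "T \<in> H2" unfolding H2_def using \<open>T \<in> H\<close> \<open>a \<notin> T\<close> \<open>T' \<in> H\<close> by simp
    qed
  next
    show "H2 \<subseteq> Hn \<inter> (\<lambda>T. T - {a}) ` Ha"
    proof
      fix T assume "T \<in> H2"
      then have h: "T \<in> H" "a \<notin> T" "insert a T \<in> H" unfolding H2_def by simp_all
      then have e: "T = insert a T - {a}" by simp
      have "insert a T \<in> Ha" unfolding Ha_def using h by simp
      then have "T \<in> (\<lambda>T. T - {a}) ` Ha" using e by (rule rev_image_eqI)
      moreover have "T \<in> Hn" unfolding Hn_def using h by simp
      ultimately show "T \<in> Hn \<inter> (\<lambda>T. T - {a}) ` Ha" by simp
    qed
  qed
  have HUn: "H = Hn \<union> Ha" "Hn \<inter> Ha = {}" unfolding Hn_def Ha_def by auto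
  have finHn: "finite Hn" "finite Ha" using finH unfolding Hn_def Ha_def by auto
  have cardH1: "card H1 + card H2 = card H"
  proof -
    have "card H1 + card H2 = card Hn + card ((\<lambda>T. T - {a}) ` Ha)"
      unfolding H1eq using card_Un_Int[of Hn "(\<lambda>T. T - {a}) ` Ha"] finHn intH by auto
    also have "\<dots> = card Hn + card Ha" using card_image[OF injHa] by simp
    also have "\<dots> = card H" using HUn finHn card_Un_disjoint by metis
    finally show ?thesis .
  qed
  have vc1: "\<forall>B\<subseteq>A0. shatters H1 B \<longrightarrow> card B \<le> d"
  proof (intro allI impI)
    fix B assume "B \<subseteq> A0" "shatters H1 B"
    have "(\<lambda>T. T \<inter> B) ` H1 = (\<lambda>T. T \<inter> B) ` H"
      unfolding H1_def using \<open>B \<subseteq> A0\<close> insert.hyps(2) by (auto simp: image_image)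
    then have "shatters H B" using \<open>shatters H1 B\<close> unfolding shatters_def by simp
    then show "card B \<le> d" using insert.prems(2) \<open>B \<subseteq> A0\<close> by auto
  qed
  have vc2: "\<forall>B\<subseteq>A0. shatters H2 B \<longrightarrow> card B \<le> d - 1"
  proof (intro allI impI)
    fix B assume "B \<subseteq> A0" "shatters H2 B"
    have "shatters H (insert a B)"
      unfolding shatters_def
    proof
      fix C assume "C \<in> Pow (insert a B)"
      then have "C - {a} \<in> Pow B" by auto
      then obtain T where T: "T \<in> H2" "C - {a} = T \<inter> B"
        using \<open>shatters H2 B\<close> unfolding shatters_def by blast
      then have T2: "T \<in> H" "a \<notin> T" "insert a T \<in> H" unfolding H2_def by auto
      show "C \<in> (\<lambda>T. T \<inter> insert a B) ` H"
      proof (cases "a \<in> C")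
        case True
        then have "C = insert a T \<inter> insert a B" using T(2) \<open>C \<in> Pow (insert a B)\<close> by auto
        then show ?thesis by (rule rev_image_eqI[OF T2(3)])
      next
        case False
        then have "C = T \<inter> insert a B" using T(2) T2(2) by auto
        then show ?thesis by (rule rev_image_eqI[OF T2(1)])
      qed
    qed
    then have "card (insert a B) \<le> d" using insert.prems(2) insert_mono[OF \<open>B \<subseteq> A0\<close>] by blast
    moreover have "finite B" by (rule finite_subset[OF \<open>B \<subseteq> A0\<close> insert.hyps(1)])
    moreover have "a \<notin> B" using \<open>B \<subseteq> A0\<close> insert.hyps(2) by auto
    ultimately show "card B \<le> d - 1" by simp
  qed
  have IH1: "card (Ed H1) \<le> d * card H1" using insert.IH[OF H1sub vc1] .
  have IH2: "card (Ed H2) \<le> (d - 1) * card H2" using insert.IH[OF H2sub vc2] .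
  have d0: "d = 0 \<Longrightarrow> H2 = {}"
  proof (rule ccontr)
    assume "d = 0" "H2 \<noteq> {}"
    have "shatters H {a}" unfolding shatters_def
    proof
      fix C assume "C \<in> Pow {a}"
      obtain T where "T \<in> H2" using \<open>H2 \<noteq> {}\<close> by auto
      then have T2: "T \<in> H" "a \<notin> T" "insert a T \<in> H" unfolding H2_def by auto
      show "C \<in> (\<lambda>T. T \<inter> {a}) ` H"
      proof (cases "a \<in> C")
        case True
        then have "C = insert a T \<inter> {a}" using \<open>C \<in> Pow {a}\<close> by auto
        then show ?thesis by (rule rev_image_eqI[OF T2(3)])
      next
        case False
        then have "C = T \<inter> {a}" using \<open>C \<in> Pow {a}\<close> T2 by auto
        then show ?thesis by (rule rev_image_eqI[OF T2(1)])
      qed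
    qed
    moreover have "{a} \<subseteq> insert a A0" by simp
    ultimately have "card {a} \<le> d" using insert.prems(2) by blast
    then show False using \<open>d = 0\<close> by simp
  qed
  define Ea where "Ea = {e \<in> Ed H. snd e = a}"
  define Eo where "Eo = {e \<in> Ed H. snd e \<noteq> a}"
  have finEd: "finite (Ed H)" using Ed_finite[of "insert a A0" H] insert.prems(1) insert.hyps(1) by simp
  have EdUn: "Ed H = Ea \<union> Eo" "Ea \<inter> Eo = {}" unfolding Ea_def Eo_def by auto
  have cardEa: "card Ea \<le> card H2"
  proof -
    have "Ea \<subseteq> (\<lambda>T. (T, a)) ` H2"
    proof
      fix e assume "e \<in> Ea"
      then have e1: "e \<in> Ed H" "snd e = a" unfolding Ea_def by simp_all
      obtain T p where ep: "e = (T, p)" by (cases e)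
      then have "p = a" using e1(2) by simp
      have "T \<in> H" "p \<notin> T" "insert p T \<in> H" using e1(1) unfolding ep Ed_def by simp_all
      then have "T \<in> H2" unfolding H2_def using \<open>p = a\<close> by simp
      moreover have "e = (\<lambda>T. (T, a)) T" using ep \<open>p = a\<close> by simp
      ultimately show "e \<in> (\<lambda>T. (T, a)) ` H2" by (rule rev_image_eqI)
    qed
    moreover have "finite H2" using finH unfolding H2_def by simp
    ultimately have "card Ea \<le> card ((\<lambda>T. (T, a)) ` H2)" by (simp add: card_mono)
    also have "\<dots> \<le> card H2" by (rule card_image_le) (use finH in \<open>simp add: H2_def\<close>)
    finally show ?thesis .
  qed
  define f where "f = (\<lambda>(T::'a set, p::'a). if a \<notin> T then Inl (T, p)
       else if T - {a} \<in> H \<and> insert p (T - {a}) \<in> H then Inr (T - {a}, p) else Inl (T - {a}, p))"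
  have fmap: "f ` Eo \<subseteq> Ed H1 <+> Ed H2"
  proof
    fix y assume "y \<in> f ` Eo"
    then obtain x where x: "x \<in> Eo" "y = f x" by (rule imageE)
    obtain T p where xp: "x = (T, p)" by (cases x)
    have e: "(T, p) \<in> Ed H" "p \<noteq> a" "y = f (T, p)" using x xp unfolding Eo_def by simp_all
    then have e2: "T \<in> H" "p \<notin> T" "insert p T \<in> H" unfolding Ed_def by simp_all
    show "y \<in> Ed H1 <+> Ed H2"
    proof (cases "a \<in> T")
      case False
      then have "y = Inl (T, p)" using e(3) unfolding f_def by simp
      moreover have "T \<in> H1" unfolding H1_def using False by (intro rev_image_eqI[OF e2(1)]) simp
      moreover have "insert p T \<in> H1" unfolding H1_def using False e(2)
        by (intro rev_image_eqI[OF e2(3)]) simp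
      ultimately show ?thesis using e2(2) unfolding Ed_def by (auto intro!: InlI)
    next
      case True
      show ?thesis
      proof (cases "T - {a} \<in> H \<and> insert p (T - {a}) \<in> H")
        case c: True
        then have "y = Inr (T - {a}, p)" using e(3) True unfolding f_def by simp
        moreover have "T - {a} \<in> H2" unfolding H2_def using c True e2 by (simp add: insert_absorb)
        moreover have "insert a (insert p (T - {a})) = insert p T" using True by auto
        moreover have "insert p (T - {a}) \<in> H2" unfolding H2_def using c True e2 e(2) calculation(3)
          by simp
        moreover have "p \<notin> T - {a}" using e2(2) by simp
        ultimately show ?thesis unfolding Ed_def by (auto intro!: InrI)
      next
        case c: False
        then have "y = Inl (T - {a}, p)" using e(3) True unfolding f_def by simp
        moreover have "T - {a} \<in> H1" unfolding H1_def by (rule imageI[OF e2(1)])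
        moreover have "insert p (T - {a}) \<in> H1" unfolding H1_def using e(2)
          by (intro rev_image_eqI[OF e2(3)]) auto
        moreover have "p \<notin> T - {a}" using e2(2) by simp
        ultimately show ?thesis unfolding Ed_def by (auto intro!: InlI)
      qed
    qed
  qed
  define g where "g = (\<lambda>z. case z of Inl (S, p) \<Rightarrow> (if S \<in> H \<and> insert p S \<in> H \<and> a \<notin> S then (S, p) else (insert a S, p))
       | Inr (S, p) \<Rightarrow> (insert a S, p))"
  have finj: "inj_on f Eo"
  proof (rule inj_on_inverseI)
    fix x assume x: "x \<in> Eo"
    obtain T p where xp: "x = (T, p)" by (cases x)
    have e: "(T, p) \<in> Ed H" "p \<noteq> a" using x xp unfolding Eo_def by simp_all
    then have e2: "T \<in> H" "p \<notin> T" "insert p T \<in> H" unfolding Ed_def by simp_all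
    show "g (f x) = x"
    proof (cases "a \<in> T")
      case False
      then show ?thesis unfolding xp f_def g_def using e2 by simp
    next
      case True
      then have iT: "insert a (T - {a}) = T" by (simp add: insert_absorb)
      show ?thesis
      proof (cases "T - {a} \<in> H \<and> insert p (T - {a}) \<in> H")
        case c: True
        then show ?thesis unfolding xp f_def g_def using True iT by simp
      next
        case c: False
        then show ?thesis unfolding xp f_def g_def using True iT c by auto
      qed
    qed
  qed
  have "card Eo \<le> card (Ed H1 <+> Ed H2)"
  proof -
    have "finite (Ed H1)" by (rule Ed_finite[OF insert.hyps(1) H1sub])
    moreover have "finite (Ed H2)" by (rule Ed_finite[OF insert.hyps(1) H2sub])
    ultimately have "finite (Ed H1 <+> Ed H2)" by simp
    then show ?thesis using card_inj_on_le[OF finj fmap] by simp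
  qed
  also have "\<dots> = card (Ed H1) + card (Ed H2)"
    by (rule card_Plus[OF Ed_finite[OF insert.hyps(1) H1sub] Ed_finite[OF insert.hyps(1) H2sub]])
  finally have cEo: "card Eo \<le> card (Ed H1) + card (Ed H2)" .
  have "card (Ed H) = card Ea + card Eo"
    using EdUn finEd by (metis card_Un_disjoint finite_Un)
  also have "\<dots> \<le> card H2 + card (Ed H1) + card (Ed H2)" using cardEa cEo by simp
  also have "\<dots> \<le> d * card H"
  proof (cases "d = 0")
    case True
    then show ?thesis using d0 IH1 by (simp add: Ed_def)
  next
    case False
    then obtain d' where dd: "d = Suc d'" using not0_implies_Suc by blast
    have "card H2 + card (Ed H1) + card (Ed H2) \<le> card H2 + d * card H1 + d' * card H2"
      using IH1 IH2 dd by simp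
    also have "\<dots> = d * (card H1 + card H2)" using dd by (simp add: algebra_simps)
    finally show ?thesis using cardH1 by simp
  qed
  finally show ?case .
qed



lemma pow_bound_aux: "r * Suc r < 2 ^ Suc r"
proof (induction r)
  case 0
  then show ?case by simp
next
  case (Suc r)
  have "Suc r \<le> 2 ^ r" by (induction r) auto
  then show ?case using Suc.IH by simp
qed

lemma pow_bound: "r < n \<Longrightarrow> r * n < (2::nat) ^ n"
proof (induction n)
  case 0
  then show ?case by simp
next
  case (Suc n)
  show ?case
  proof (cases "r < n")
    case True
    have "n < 2 ^ n" by (rule less_exp)
    then have "r \<le> 2 ^ n" using True by linarith
    then show ?thesis using Suc.IH[OF True] by simp
  next
    case False
    then have "r = n" using Suc.prems by simp
    then show ?thesis using pow_bound_aux[of r] by simp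
  qed
qed

lemma shatter_le:
  assumes fI: "finite I" and fP: "finite P"
    and TB: "\<forall>A\<subseteq>P. A \<noteq> {} \<longrightarrow> card ((\<lambda>x. D x \<inter> A) ` I) \<le> r * card A"
    and B: "B \<subseteq> P" and sh: "Pow B \<subseteq> (\<lambda>x. D x \<inter> B) ` I"
  shows "card B \<le> r"
proof (rule ccontr)
  assume "\<not> card B \<le> r"
  then have lt: "r < card B" by simp
  then have "B \<noteq> {}" by auto
  have fB: "finite B" using B fP finite_subset by blast
  have "2 ^ card B = card (Pow B)" using fB by (simp add: card_Pow)
  also have "\<dots> \<le> card ((\<lambda>x. D x \<inter> B) ` I)" using sh fI by (simp add: card_mono)
  also have "\<dots> \<le> r * card B" using TB B \<open>B \<noteq> {}\<close> by blast
  finally show False using pow_bound[OF lt] by simp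
qed

lemma sum_fibers:
  assumes "finite S" "finite B" "f ` S \<subseteq> B"
  shows "(\<Sum>b\<in>B. card {x\<in>S. f x = b}) = card S"
proof -
  have "card S = (\<Sum>b\<in>f ` S. card {x\<in>S. f x = b})"
    using sum.image_gen[OF assms(1), of "\<lambda>_. 1" f] by (simp only: card_eq_sum)
  also have "\<dots> = (\<Sum>b\<in>B. card {x\<in>S. f x = b})"
  proof (rule sum.mono_neutral_left[OF assms(2) assms(3)])
    show "\<forall>i\<in>B - f ` S. card {x \<in> S. f x = i} = 0"
    proof
      fix i assume "i \<in> B - f ` S"
      then have "{x \<in> S. f x = i} = {}" by auto
      then show "card {x \<in> S. f x = i} = 0" by (simp only: card.empty)
    qed
  qed
  finally show ?thesis by simp
qed

lemma min_mult_ge: "(e + b) * min e (b::nat) \<ge> e * b"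
  by (cases "e \<le> b") (simp_all add: algebra_simps min_def mult_le_mono)

lemma class_lower:
  fixes f :: "'a \<Rightarrow> 'b set"
  assumes fK: "finite K" and fQ: "finite Q"
    and dist: "\<forall>x\<in>K. \<forall>y\<in>K. x \<noteq> y \<longrightarrow> \<delta> \<le> card (((f x - f y) \<union> (f y - f x)) \<inter> Q)"
  shows "(card K - 1) * \<delta> \<le> 2 * (\<Sum>p\<in>Q. min (card {x\<in>K. p \<notin> f x}) (card {x\<in>K. p \<in> f x}))"
proof -
  define k where "k = card K"
  define e where "e p = card {x\<in>K. p \<notin> f x}" for p
  define b where "b p = card {x\<in>K. p \<in> f x}" for p
  have eb: "e p + b p = k" for p
  proof -
    have "{x\<in>K. p \<notin> f x} \<union> {x\<in>K. p \<in> f x} = K" by blast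
    moreover have "{x\<in>K. p \<notin> f x} \<inter> {x\<in>K. p \<in> f x} = {}" by blast
    ultimately show ?thesis unfolding e_def b_def k_def
      using fK by (metis (no_types, lifting) card_Un_disjoint finite_Un)
  qed
  have prodsum: "(\<Sum>p\<in>Q. e p * b p) = (\<Sum>z\<in>K \<times> K. card ((f (snd z) - f (fst z)) \<inter> Q))"
  proof -
    have "e p * b p = (\<Sum>z\<in>K \<times> K. if p \<notin> f (fst z) \<and> p \<in> f (snd z) then 1 else 0)" for p
    proof -
      have "e p * b p = card ({x\<in>K. p \<notin> f x} \<times> {y\<in>K. p \<in> f y})"
        unfolding e_def b_def by (simp add: card_cartesian_product)
      also have "{x\<in>K. p \<notin> f x} \<times> {y\<in>K. p \<in> f y} = {z \<in> K \<times> K. p \<notin> f (fst z) \<and> p \<in> f (snd z)}"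
        by auto
      also have "card \<dots> = (\<Sum>z\<in>K \<times> K. if p \<notin> f (fst z) \<and> p \<in> f (snd z) then 1 else 0)"
        using fK by (simp add: sum.If_cases Int_def)
      finally show ?thesis .
    qed
    then have "(\<Sum>p\<in>Q. e p * b p) = (\<Sum>p\<in>Q. \<Sum>z\<in>K \<times> K. if p \<notin> f (fst z) \<and> p \<in> f (snd z) then 1 else 0)"
      by simp
    also have "\<dots> = (\<Sum>z\<in>K \<times> K. \<Sum>p\<in>Q. if p \<notin> f (fst z) \<and> p \<in> f (snd z) then 1 else 0)"
      by (rule sum.swap)
    also have "\<dots> = (\<Sum>z\<in>K \<times> K. card ((f (snd z) - f (fst z)) \<inter> Q))"
    proof (rule sum.cong[OF refl])
      fix z
      have "(\<Sum>p\<in>Q. if p \<notin> f (fst z) \<and> p \<in> f (snd z) then 1 else 0) = card {p\<in>Q. p \<notin> f (fst z) \<and> p \<in> f (snd z)}"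
        using fQ by (simp add: sum.If_cases Int_def)
      also have "{p\<in>Q. p \<notin> f (fst z) \<and> p \<in> f (snd z)} = (f (snd z) - f (fst z)) \<inter> Q" by blast
      finally show "(\<Sum>p\<in>Q. if p \<notin> f (fst z) \<and> p \<in> f (snd z) then 1 else 0) = card ((f (snd z) - f (fst z)) \<inter> Q)" .
    qed
    finally show ?thesis .
  qed
  have swapsum: "(\<Sum>z\<in>K \<times> K. card ((f (snd z) - f (fst z)) \<inter> Q)) = (\<Sum>z\<in>K \<times> K. card ((f (fst z) - f (snd z)) \<inter> Q))"
  proof -
    have "(\<Sum>z\<in>K \<times> K. card ((f (snd z) - f (fst z)) \<inter> Q)) = (\<Sum>x\<in>K. \<Sum>y\<in>K. card ((f y - f x) \<inter> Q))"
      by (simp add: sum.cartesian_product split_def)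
    also have "\<dots> = (\<Sum>y\<in>K. \<Sum>x\<in>K. card ((f y - f x) \<inter> Q))" by (rule sum.swap)
    also have "\<dots> = (\<Sum>z\<in>K \<times> K. card ((f (fst z) - f (snd z)) \<inter> Q))"
      by (simp add: sum.cartesian_product split_def)
    finally show ?thesis .
  qed
  define OD where "OD = {z \<in> K \<times> K. fst z \<noteq> snd z}"
  have fKK: "finite (K \<times> K)" using fK by simp
  have cardOD: "card OD = k * k - k"
  proof -
    have "OD = K \<times> K - (\<lambda>x. (x, x)) ` K" unfolding OD_def by auto
    moreover have "card ((\<lambda>x. (x, x)) ` K) = k" unfolding k_def by (rule card_image) (simp add: inj_on_def)
    moreover have "(\<lambda>x. (x, x)) ` K \<subseteq> K \<times> K" by auto
    ultimately show ?thesis using fK by (simp add: card_Diff_subset card_cartesian_product k_def)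
  qed
  have "(k * k - k) * \<delta> = (\<Sum>z\<in>OD. \<delta>)" using cardOD by simp
  also have "\<dots> \<le> (\<Sum>z\<in>OD. card (((f (fst z) - f (snd z)) \<union> (f (snd z) - f (fst z))) \<inter> Q))"
    by (rule sum_mono) (use dist in \<open>auto simp: OD_def\<close>)
  also have "\<dots> \<le> (\<Sum>z\<in>K \<times> K. card (((f (fst z) - f (snd z)) \<union> (f (snd z) - f (fst z))) \<inter> Q))"
    by (rule sum_mono2[OF fKK]) (auto simp: OD_def)
  also have "\<dots> = (\<Sum>z\<in>K \<times> K. card ((f (fst z) - f (snd z)) \<inter> Q) + card ((f (snd z) - f (fst z)) \<inter> Q))"
  proof (rule sum.cong[OF refl])
    fix z
    have "((f (fst z) - f (snd z)) \<union> (f (snd z) - f (fst z))) \<inter> Q = ((f (fst z) - f (snd z)) \<inter> Q) \<union> ((f (snd z) - f (fst z)) \<inter> Q)" by blast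
    moreover have "((f (fst z) - f (snd z)) \<inter> Q) \<inter> ((f (snd z) - f (fst z)) \<inter> Q) = {}" by blast
    ultimately show "card (((f (fst z) - f (snd z)) \<union> (f (snd z) - f (fst z))) \<inter> Q) = card ((f (fst z) - f (snd z)) \<inter> Q) + card ((f (snd z) - f (fst z)) \<inter> Q)"
      using fQ by (simp add: card_Un_disjoint)
  qed
  also have "\<dots> = 2 * (\<Sum>p\<in>Q. e p * b p)"
    using prodsum swapsum by (simp add: sum.distrib)
  also have "\<dots> \<le> 2 * (\<Sum>p\<in>Q. k * min (e p) (b p))"
    using min_mult_ge eb by (intro mult_le_mono2 sum_mono) metis
  also have "\<dots> = k * (2 * (\<Sum>p\<in>Q. min (e p) (b p)))" by (simp add: sum_distrib_left algebra_simps)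
  finally have main: "(k * k - k) * \<delta> \<le> k * (2 * (\<Sum>p\<in>Q. min (e p) (b p)))" .
  show ?thesis
  proof (cases "k = 0")
    case True
    then show ?thesis unfolding k_def by simp
  next
    case False
    have kk: "k * k - k = k * (k - 1)" by (simp add: diff_mult_distrib2)
    have "k * ((k - 1) * \<delta>) \<le> k * (2 * (\<Sum>p\<in>Q. min (e p) (b p)))" using main unfolding kk by (simp add: mult.assoc)
    then have "(k - 1) * \<delta> \<le> 2 * (\<Sum>p\<in>Q. min (e p) (b p))" using False by simp
    then show ?thesis unfolding k_def e_def b_def .
  qed
qed



definition w :: "('a \<Rightarrow> 'b set) \<Rightarrow> 'a set \<Rightarrow> 'b set \<Rightarrow> 'b set \<Rightarrow> nat" where
  "w D I A T = card {x\<in>I. D x \<inter> A = T}"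

definition Qs :: "'b set \<Rightarrow> ('b set \<times> 'b) set" where
  "Qs A = {(T,p). p \<in> A \<and> T \<subseteq> A \<and> p \<notin> T}"

definition Fm :: "('a \<Rightarrow> 'b set) \<Rightarrow> 'a set \<Rightarrow> 'b set \<Rightarrow> 'b set \<times> 'b \<Rightarrow> nat" where
  "Fm D I A z = min (w D I A (fst z)) (w D I A (insert (snd z) (fst z)))"

lemma Qs_finite: "finite A \<Longrightarrow> finite (Qs A)"
proof -
  assume "finite A"
  then have "finite (Pow A \<times> A)" by simp
  moreover have "Qs A \<subseteq> Pow A \<times> A" unfolding Qs_def by auto
  ultimately show ?thesis by (rule finite_subset[rotated])
qed

lemma w_le: "finite I \<Longrightarrow> w D I A T \<le> card I"
  unfolding w_def by (rule card_mono) auto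

lemma min_as_card: "a \<le> M \<Longrightarrow> min a b = card {l\<in>{1..M}. l \<le> a \<and> l \<le> (b::nat)}"
proof -
  assume "a \<le> M"
  then have "{l\<in>{1..M}. l \<le> a \<and> l \<le> b} = {1..min a b}" by auto
  then show ?thesis by simp
qed

lemma upper:
  assumes fI: "finite I" and fP: "finite P"
    and TB: "\<forall>A\<subseteq>P. A \<noteq> {} \<longrightarrow> card ((\<lambda>x. D x \<inter> A) ` I) \<le> r * card A"
    and A: "A \<subseteq> P"
  shows "(\<Sum>z\<in>Qs A. Fm D I A z) \<le> r * card I"
proof -
  define M where "M = card I"
  have fA: "finite A" using A fP finite_subset by blast
  define Hl where "Hl l = {T \<in> Pow A. l \<le> w D I A T}" for l
  have fQ: "finite (Qs A)" using Qs_finite[OF fA] .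
  have "(\<Sum>z\<in>Qs A. Fm D I A z) = (\<Sum>z\<in>Qs A. \<Sum>l\<in>{1..M}. if l \<le> w D I A (fst z) \<and> l \<le> w D I A (insert (snd z) (fst z)) then 1 else 0)"
  proof (rule sum.cong[OF refl])
    fix z
    have "Fm D I A z = card {l\<in>{1..M}. l \<le> w D I A (fst z) \<and> l \<le> w D I A (insert (snd z) (fst z))}"
      unfolding Fm_def using w_le[OF fI] M_def by (intro min_as_card) simp
    also have "\<dots> = (\<Sum>l\<in>{1..M}. if l \<le> w D I A (fst z) \<and> l \<le> w D I A (insert (snd z) (fst z)) then 1 else 0)"
      by (simp add: sum.If_cases Int_def)
    finally show "Fm D I A z = (\<Sum>l\<in>{1..M}. if l \<le> w D I A (fst z) \<and> l \<le> w D I A (insert (snd z) (fst z)) then 1 else 0)" .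
  qed
  also have "\<dots> = (\<Sum>l\<in>{1..M}. \<Sum>z\<in>Qs A. if l \<le> w D I A (fst z) \<and> l \<le> w D I A (insert (snd z) (fst z)) then 1 else 0)"
    by (rule sum.swap)
  also have "\<dots> = (\<Sum>l\<in>{1..M}. card (Ed (Hl l)))"
  proof (rule sum.cong[OF refl])
    fix l
    have "(\<Sum>z\<in>Qs A. if l \<le> w D I A (fst z) \<and> l \<le> w D I A (insert (snd z) (fst z)) then 1 else 0)
        = card {z\<in>Qs A. l \<le> w D I A (fst z) \<and> l \<le> w D I A (insert (snd z) (fst z))}"
      using fQ by (simp add: sum.If_cases Int_def)
    also have "{z\<in>Qs A. l \<le> w D I A (fst z) \<and> l \<le> w D I A (insert (snd z) (fst z))} = Ed (Hl l)"
      unfolding Qs_def Ed_def Hl_def by auto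
    finally show "(\<Sum>z\<in>Qs A. if l \<le> w D I A (fst z) \<and> l \<le> w D I A (insert (snd z) (fst z)) then 1 else 0) = card (Ed (Hl l))" .
  qed
  also have "\<dots> \<le> (\<Sum>l\<in>{1..M}. r * card (Hl l))"
  proof (rule sum_mono)
    fix l assume l: "l \<in> {1..M}"
    show "card (Ed (Hl l)) \<le> r * card (Hl l)"
    proof (rule edge_bound[OF fA])
      show "Hl l \<subseteq> Pow A" unfolding Hl_def by auto
      show "\<forall>B\<subseteq>A. shatters (Hl l) B \<longrightarrow> card B \<le> r"
      proof (intro allI impI)
        fix B assume B: "B \<subseteq> A" and sh: "shatters (Hl l) B"
        have "Pow B \<subseteq> (\<lambda>x. D x \<inter> B) ` I"
        proof
          fix C assume "C \<in> Pow B"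
          then obtain T where T: "T \<in> Hl l" "C = T \<inter> B" using sh unfolding shatters_def by blast
          then have "1 \<le> w D I A T" using l unfolding Hl_def by auto
          then have "{x\<in>I. D x \<inter> A = T} \<noteq> {}" unfolding w_def by (metis card.empty not_one_le_zero)
          then obtain x where x: "x \<in> I" "D x \<inter> A = T" by blast
          then have "D x \<inter> B = C" using T(2) B by blast
          then have "C = (\<lambda>x. D x \<inter> B) x" by simp
          then show "C \<in> (\<lambda>x. D x \<inter> B) ` I" using x(1) by (rule image_eqI)
        qed
        then show "card B \<le> r" using shatter_le[OF fI fP TB] B A by blast
      qed
    qed
  qed
  also have "\<dots> = r * (\<Sum>l\<in>{1..M}. card (Hl l))" by (simp add: sum_distrib_left)
  also have "(\<Sum>l\<in>{1..M}. card (Hl l)) = M"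
  proof -
    have "(\<Sum>l\<in>{1..M}. card (Hl l)) = (\<Sum>l\<in>{1..M}. \<Sum>T\<in>Pow A. if l \<le> w D I A T then 1 else 0)"
      unfolding Hl_def using fA by (simp add: sum.If_cases Int_def)
    also have "\<dots> = (\<Sum>T\<in>Pow A. \<Sum>l\<in>{1..M}. if l \<le> w D I A T then 1 else 0)" by (rule sum.swap)
    also have "\<dots> = (\<Sum>T\<in>Pow A. w D I A T)"
    proof (rule sum.cong[OF refl])
      fix T
      have "(\<Sum>l\<in>{1..M}. if l \<le> w D I A T then 1 else 0) = card {l\<in>{1..M}. l \<le> w D I A T}"
        by (simp add: sum.If_cases Int_def)
      also have "{l\<in>{1..M}. l \<le> w D I A T} = {1..w D I A T}" using w_le[OF fI, of D A T] M_def by auto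
      finally show "(\<Sum>l\<in>{1..M}. if l \<le> w D I A T then 1 else 0) = w D I A T" by simp
    qed
    also have "\<dots> = card I" unfolding w_def
      by (rule sum_fibers[OF fI]) (use fA in auto)
    finally show ?thesis unfolding M_def .
  qed
  finally show ?thesis unfolding M_def by simp
qed



lemma lower:
  assumes fI: "finite I" and fP: "finite P" and A: "A \<subseteq> P"
    and dist: "\<forall>x\<in>I. \<forall>y\<in>I. x \<noteq> y \<longrightarrow> \<delta> \<le> card (((D x - D y) \<union> (D y - D x)) \<inter> P)"
  shows "(card I - card ((\<lambda>x. D x \<inter> A) ` I)) * \<delta> \<le> 2 * (\<Sum>z\<in>Pow A \<times> (P - A). Fm D I (insert (snd z) A) z)"
proof -
  have fA: "finite A" using A fP finite_subset by blast
  define K where "K T = {x\<in>I. D x \<inter> A = T}" for T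
  have fK: "finite (K T)" for T unfolding K_def using fI by simp
  have perT: "(card (K T) - 1) * \<delta> \<le> 2 * (\<Sum>p\<in>P - A. Fm D I (insert p A) (T, p))" if T: "T \<subseteq> A" for T
  proof -
    have e1: "w D I (insert p A) T = card {x\<in>K T. p \<notin> D x}" if p: "p \<in> P - A" for p
    proof -
      have "{x\<in>I. D x \<inter> insert p A = T} = {x\<in>K T. p \<notin> D x}"
        unfolding K_def using T p by auto
      then show ?thesis unfolding w_def by simp
    qed
    have e2: "w D I (insert p A) (insert p T) = card {x\<in>K T. p \<in> D x}" if p: "p \<in> P - A" for p
    proof -
      have "{x\<in>I. D x \<inter> insert p A = insert p T} = {x\<in>K T. p \<in> D x}"
        unfolding K_def using T p by auto
      then show ?thesis unfolding w_def by simp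
    qed
    have "(card (K T) - 1) * \<delta> \<le> 2 * (\<Sum>p\<in>P - A. min (card {x\<in>K T. p \<notin> D x}) (card {x\<in>K T. p \<in> D x}))"
    proof (rule class_lower[OF fK])
      show "finite (P - A)" using fP by simp
      show "\<forall>x\<in>K T. \<forall>y\<in>K T. x \<noteq> y \<longrightarrow> \<delta> \<le> card ((D x - D y \<union> (D y - D x)) \<inter> (P - A))"
      proof (intro ballI impI)
        fix x y assume x: "x \<in> K T" and y: "y \<in> K T" and xy: "x \<noteq> y"
        have "(D x - D y \<union> (D y - D x)) \<inter> (P - A) = (D x - D y \<union> (D y - D x)) \<inter> P"
          using x y unfolding K_def by blast
        then show "\<delta> \<le> card ((D x - D y \<union> (D y - D x)) \<inter> (P - A))"
          using dist x y xy unfolding K_def by simp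
      qed
    qed
    also have "(\<Sum>p\<in>P - A. min (card {x\<in>K T. p \<notin> D x}) (card {x\<in>K T. p \<in> D x})) = (\<Sum>p\<in>P - A. Fm D I (insert p A) (T, p))"
      by (rule sum.cong[OF refl]) (simp add: Fm_def e1 e2)
    finally show ?thesis .
  qed
  have eqs: "(\<Sum>z\<in>Pow A \<times> (P - A). Fm D I (insert (snd z) A) z) = (\<Sum>T\<in>Pow A. \<Sum>p\<in>P - A. Fm D I (insert p A) (T, p))"
    by (simp add: sum.cartesian_product split_def)
  have "(\<Sum>T\<in>Pow A. (card (K T) - 1) * \<delta>) \<le> (\<Sum>T\<in>Pow A. 2 * (\<Sum>p\<in>P - A. Fm D I (insert p A) (T, p)))"
    by (rule sum_mono) (use perT in auto)
  also have "\<dots> = 2 * (\<Sum>T\<in>Pow A. \<Sum>p\<in>P - A. Fm D I (insert p A) (T, p))" by (simp add: sum_distrib_left)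
  finally have sumT: "(\<Sum>T\<in>Pow A. (card (K T) - 1) * \<delta>) \<le> 2 * (\<Sum>z\<in>Pow A \<times> (P - A). Fm D I (insert (snd z) A) z)"
    unfolding eqs .
  define img where "img = (\<lambda>x. D x \<inter> A) ` I"
  have imgsub: "img \<subseteq> Pow A" unfolding img_def by auto
  have sK: "(\<Sum>T\<in>Pow A. card (K T)) = card I" unfolding K_def
    by (rule sum_fibers[OF fI]) (use fA in auto)
  have sI: "(\<Sum>T\<in>Pow A. if T \<in> img then 1 else 0) = card img"
    using fA imgsub by (simp add: sum.If_cases Int_absorb1)
  have ptw: "card (K T) \<le> (card (K T) - 1) + (if T \<in> img then 1 else 0)" for T
  proof (cases "T \<in> img")
    case True
    then show ?thesis by simp
  next
    case False
    then have "K T = {}" unfolding K_def img_def by auto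
    then show ?thesis by simp
  qed
  have "card I \<le> (\<Sum>T\<in>Pow A. card (K T) - 1) + card img"
  proof -
    have "card I = (\<Sum>T\<in>Pow A. card (K T))" using sK by simp
    also have "\<dots> \<le> (\<Sum>T\<in>Pow A. (card (K T) - 1) + (if T \<in> img then 1 else 0))"
      by (rule sum_mono) (rule ptw)
    also have "\<dots> = (\<Sum>T\<in>Pow A. card (K T) - 1) + card img" using sI by (simp add: sum.distrib)
    finally show ?thesis .
  qed
  then have "card I - card img \<le> (\<Sum>T\<in>Pow A. card (K T) - 1)" by simp
  then have "(card I - card img) * \<delta> \<le> (\<Sum>T\<in>Pow A. card (K T) - 1) * \<delta>" by (rule mult_le_mono1)
  also have "\<dots> = (\<Sum>T\<in>Pow A. (card (K T) - 1) * \<delta>)" by (simp add: sum_distrib_right)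
  finally show ?thesis using sumT unfolding img_def by simp
qed

definition Ss :: "'b set \<Rightarrow> nat \<Rightarrow> 'b set set" where
  "Ss P j = {A. A \<subseteq> P \<and> card A = j}"

lemma Ss_finite: "finite P \<Longrightarrow> finite (Ss P j)"
  unfolding Ss_def by (rule finite_subset[of _ "Pow P"]) auto

lemma double_count:
  assumes fP: "finite P"
  shows "(\<Sum>A'\<in>Ss P (Suc j). \<Sum>z\<in>Qs A'. G A' z) = (\<Sum>A\<in>Ss P j. \<Sum>z\<in>Pow A \<times> (P - A). G (insert (snd z) A) z)"
proof -
  have fS: "finite (Ss P j')" for j' using Ss_finite[OF fP] .
  have fQ: "\<forall>A'\<in>Ss P (Suc j). finite (Qs A')"
    using fP by (auto simp: Ss_def intro!: Qs_finite elim: finite_subset)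
  have fR: "\<forall>A\<in>Ss P j. finite (Pow A \<times> (P - A))"
    using fP by (auto simp: Ss_def elim: finite_subset)
  have L: "(\<Sum>A'\<in>Ss P (Suc j). \<Sum>z\<in>Qs A'. G A' z) = (\<Sum>u\<in>Sigma (Ss P (Suc j)) Qs. G (fst u) (snd u))"
    using sum.Sigma[OF fS fQ, of G] by (simp add: split_def)
  have R: "(\<Sum>A\<in>Ss P j. \<Sum>z\<in>Pow A \<times> (P - A). G (insert (snd z) A) z) = (\<Sum>u\<in>Sigma (Ss P j) (\<lambda>A. Pow A \<times> (P - A)). G (insert (snd (snd u)) (fst u)) (snd u))"
    using sum.Sigma[OF fS fR, of "\<lambda>A z. G (insert (snd z) A) z"] by (simp add: split_def)
  have "(\<Sum>u\<in>Sigma (Ss P (Suc j)) Qs. G (fst u) (snd u)) = (\<Sum>u\<in>Sigma (Ss P j) (\<lambda>A. Pow A \<times> (P - A)). G (insert (snd (snd u)) (fst u)) (snd u))"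
  proof (rule sum.reindex_bij_witness[where i = "\<lambda>u. (insert (snd (snd u)) (fst u), snd u)" and j = "\<lambda>u. (fst u - {snd (snd u)}, snd u)"])
    fix u assume u: "u \<in> Sigma (Ss P (Suc j)) Qs"
    obtain A' T p where uu: "u = (A', (T, p))" by (metis prod.collapse)
    have h: "A' \<subseteq> P" "card A' = Suc j" "p \<in> A'" "T \<subseteq> A'" "p \<notin> T" using u unfolding uu Ss_def Qs_def by auto
    show "(insert (snd (snd (fst u - {snd (snd u)}, snd u))) (fst (fst u - {snd (snd u)}, snd u)), snd (fst u - {snd (snd u)}, snd u)) = u"
      unfolding uu using h by (simp add: insert_absorb)
    have fA': "finite A'" using h(1) fP finite_subset by blast
    have "card (A' - {p}) = j" using h(2) h(3) fA' by simp
    then show "(fst u - {snd (snd u)}, snd u) \<in> Sigma (Ss P j) (\<lambda>A. Pow A \<times> (P - A))"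
      unfolding uu Ss_def using h by auto
    show "G (insert (snd (snd (fst u - {snd (snd u)}, snd u))) (fst (fst u - {snd (snd u)}, snd u))) (snd (fst u - {snd (snd u)}, snd u)) = G (fst u) (snd u)"
      unfolding uu using h by (simp add: insert_absorb)
  next
    fix u assume u: "u \<in> Sigma (Ss P j) (\<lambda>A. Pow A \<times> (P - A))"
    obtain A T p where uu: "u = (A, (T, p))" by (metis prod.collapse)
    have h: "A \<subseteq> P" "card A = j" "p \<in> P" "p \<notin> A" "T \<subseteq> A" using u unfolding uu Ss_def by auto
    show "(fst (insert (snd (snd u)) (fst u), snd u) - {snd (snd (insert (snd (snd u)) (fst u), snd u))}, snd (insert (snd (snd u)) (fst u), snd u)) = u"
      unfolding uu using h by simp
    have fA: "finite A" using h(1) fP finite_subset by blast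
    have "card (insert p A) = Suc j" using h fA by simp
    moreover have "p \<notin> T" using h by auto
    ultimately show "(insert (snd (snd u)) (fst u), snd u) \<in> Sigma (Ss P (Suc j)) Qs"
      unfolding uu Ss_def Qs_def using h by auto
  qed
  then show ?thesis using L R by simp
qed



lemma arith_final: "4 * X \<le> (M::nat) \<Longrightarrow> 2 * (M - (X + 1)) \<le> M \<Longrightarrow> M \<le> 4"
  by linarith

theorem haussler:
  assumes fI: "finite I" and fP: "finite P"
    and TB: "\<forall>A\<subseteq>P. A \<noteq> {} \<longrightarrow> card ((\<lambda>x. D x \<inter> A) ` I) \<le> r * card A"
    and r1: "1 \<le> r" and c1: "1 \<le> c1"
    and NM: "card P \<le> c1 * card I"
    and dist: "\<forall>x\<in>I. \<forall>y\<in>I. x \<noteq> y \<longrightarrow> 16 * r * r * c1 \<le> card (((D x - D y) \<union> (D y - D x)) \<inter> P)"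
  shows "card I \<le> 4"
proof -
  define N where "N = card P"
  define M where "M = card I"
  define \<delta> where "\<delta> = 16 * r * r * c1"
  define E where "E = 4 * r * c1"
  have dpos: "0 < \<delta>" unfolding \<delta>_def using r1 c1 by simp
  have Epos: "0 < E" unfolding E_def using r1 c1 by simp
  show ?thesis
  proof (cases "N = 0")
    case True
    then have "P = {}" using fP unfolding N_def by simp
    have "\<forall>x\<in>I. \<forall>y\<in>I. x = y"
    proof (intro ballI)
      fix x y assume "x \<in> I" "y \<in> I"
      show "x = y"
      proof (rule ccontr)
        assume "x \<noteq> y"
        then have "\<delta> \<le> 0" using dist \<open>x \<in> I\<close> \<open>y \<in> I\<close> \<open>P = {}\<close> unfolding \<delta>_def by fastforce
        then show False using dpos by simp
      qed
    qed
    then have "card I \<le> 1" using card_le_Suc0_iff_eq[OF fI] by simp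
    then show ?thesis by simp
  next
    case False
    then have Npos: "0 < N" by simp
    define j where "j = N div E"
    have jN: "j \<le> N" unfolding j_def by simp
    have jE: "j * E \<le> N" unfolding j_def by (simp add: div_times_less_eq_dividend)
    have NjE: "N \<le> Suc j * E"
    proof -
      have e: "N div E * E + N mod E = N" by (rule div_mult_mod_eq)
      have m: "N mod E < E" using Epos by simp
      have "Suc j * E = E + N div E * E" unfolding j_def by simp
      then show ?thesis using e m by linarith
    qed
    define C0 where "C0 = N choose j"
    define C1 where "C1 = N choose Suc j"
    define L where "L = M - (r * j + 1)"
    have cardS: "card (Ss P i) = N choose i" for i unfolding Ss_def N_def using n_subsets[OF fP] by simp
    have imgb: "card ((\<lambda>x. D x \<inter> A) ` I) \<le> r * j + 1" if A: "A \<in> Ss P j" for A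
    proof (cases "A = {}")
      case True
      then have "(\<lambda>x. D x \<inter> A) ` I \<subseteq> {{}}" by auto
      then have "card ((\<lambda>x. D x \<inter> A) ` I) \<le> card {{}::'b set}" by (rule card_mono[rotated]) simp
      then have "card ((\<lambda>x. D x \<inter> A) ` I) \<le> 1" by simp
      then show ?thesis by simp
    next
      case False
      then have "card ((\<lambda>x. D x \<inter> A) ` I) \<le> r * card A" using TB A unfolding Ss_def by blast
      then show ?thesis using A unfolding Ss_def by simp
    qed
    have step1: "C0 * (L * \<delta>) \<le> 2 * (C1 * (r * M))"
    proof -
      have "C0 * (L * \<delta>) = (\<Sum>A\<in>Ss P j. L * \<delta>)" using cardS unfolding C0_def by simp
      also have "\<dots> \<le> (\<Sum>A\<in>Ss P j. 2 * (\<Sum>z\<in>Pow A \<times> (P - A). Fm D I (insert (snd z) A) z))"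
      proof (rule sum_mono)
        fix A assume A: "A \<in> Ss P j"
        have "L \<le> card I - card ((\<lambda>x. D x \<inter> A) ` I)" using imgb[OF A] unfolding L_def M_def by simp
        then have "L * \<delta> \<le> (card I - card ((\<lambda>x. D x \<inter> A) ` I)) * \<delta>" by (rule mult_le_mono1)
        also have "\<dots> \<le> 2 * (\<Sum>z\<in>Pow A \<times> (P - A). Fm D I (insert (snd z) A) z)"
          by (rule lower[OF fI fP]) (use A dist in \<open>auto simp: Ss_def \<delta>_def\<close>)
        finally show "L * \<delta> \<le> 2 * (\<Sum>z\<in>Pow A \<times> (P - A). Fm D I (insert (snd z) A) z)" .
      qed
      also have "\<dots> = 2 * (\<Sum>A\<in>Ss P j. \<Sum>z\<in>Pow A \<times> (P - A). Fm D I (insert (snd z) A) z)"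
        by (simp add: sum_distrib_left)
      also have "(\<Sum>A\<in>Ss P j. \<Sum>z\<in>Pow A \<times> (P - A). Fm D I (insert (snd z) A) z) = (\<Sum>A'\<in>Ss P (Suc j). \<Sum>z\<in>Qs A'. Fm D I A' z)"
        using double_count[OF fP, where j=j and G="Fm D I"] by simp
      also have "\<dots> \<le> (\<Sum>A'\<in>Ss P (Suc j). r * card I)"
        by (rule sum_mono) (rule upper[OF fI fP TB], simp add: Ss_def)
      also have "\<dots> = C1 * (r * M)" using cardS unfolding C1_def M_def by simp
      finally show ?thesis by simp
    qed
    have step2: "Suc j * C1 \<le> N * C0"
    proof -
      have "Suc j * C1 = N * ((N - 1) choose j)" unfolding C1_def by (rule binomial_absorption)
      also have "\<dots> = (N - j) * C0" unfolding C0_def by (rule binomial_absorb_comp[symmetric])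
      also have "\<dots> \<le> N * C0" by simp
      finally show ?thesis .
    qed
    have C0pos: "0 < C0" unfolding C0_def using jN by simp
    have "C0 * (Suc j * (L * \<delta>)) = Suc j * (C0 * (L * \<delta>))" by (simp add: algebra_simps)
    also have "\<dots> \<le> Suc j * (2 * (C1 * (r * M)))" by (rule mult_le_mono2[OF step1])
    also have "\<dots> = 2 * (r * M) * (Suc j * C1)" by (simp only: ac_simps)
    also have "\<dots> \<le> 2 * (r * M) * (N * C0)" by (rule mult_le_mono2[OF step2])
    also have "\<dots> = C0 * (2 * r * M * N)" by (simp only: ac_simps)
    finally have "C0 * (Suc j * (L * \<delta>)) \<le> C0 * (2 * r * M * N)" .
    then have s3: "Suc j * (L * \<delta>) \<le> 2 * r * M * N" using C0pos by simp
    have "(4 * r * N) * L \<le> (Suc j * \<delta>) * L"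
    proof -
      have "4 * r * N \<le> 4 * r * (Suc j * E)" using NjE by simp
      also have "\<dots> = Suc j * \<delta>" unfolding \<delta>_def E_def by (simp add: algebra_simps)
      finally show ?thesis by (rule mult_le_mono1)
    qed
    also have "(Suc j * \<delta>) * L = Suc j * (L * \<delta>)" by (simp only: ac_simps)
    also have "\<dots> \<le> 2 * r * M * N" by (rule s3)
    finally have X: "(4 * r * N) * L \<le> 2 * r * M * N" .
    have e1: "(2 * r * N) * (2 * L) = (4 * r * N) * L" by (simp add: algebra_simps)
    have e2: "(2 * r * N) * M = 2 * r * M * N" by (simp add: algebra_simps)
    have "(2 * r * N) * (2 * L) \<le> (2 * r * N) * M" unfolding e1 e2 by (rule X)
    moreover have "0 < 2 * r * N" using r1 Npos by simp
    ultimately have s4: "2 * L \<le> M" by simp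
    have "c1 * (4 * r * j) \<le> c1 * M"
    proof -
      have "c1 * (4 * r * j) = j * E" unfolding E_def by simp
      also have "\<dots> \<le> N" by (rule jE)
      also have "\<dots> \<le> c1 * M" using NM unfolding N_def M_def .
      finally show ?thesis .
    qed
    then have s5: "4 * (r * j) \<le> M" using c1 by simp
    have "M \<le> 4" by (rule arith_final[OF s5]) (use s4 in \<open>simp add: L_def\<close>)
    then show ?thesis unfolding M_def .
  qed
qed



lemma indep_set:
  fixes adj :: "'a \<Rightarrow> 'a \<Rightarrow> bool"
  assumes sym: "\<And>x y. adj x y \<Longrightarrow> adj y x"
    and irr: "\<And>x. \<not> adj x x"
  shows "finite R \<Longrightarrow> (\<forall>A\<subseteq>R. card {z \<in> A \<times> A. adj (fst z) (snd z)} \<le> 2 * r * card A)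
    \<Longrightarrow> \<exists>I\<subseteq>R. (\<forall>x\<in>I. \<forall>y\<in>I. \<not> adj x y) \<and> card R \<le> (2 * r + 1) * card I"
proof (induction "card R" arbitrary: R rule: less_induct)
  case less
  show ?case
  proof (cases "R = {}")
    case True
    then show ?thesis by auto
  next
    case False
    have "\<exists>x\<in>R. card {y\<in>R. adj x y} \<le> 2 * r"
    proof (rule ccontr)
      assume "\<not> (\<exists>x\<in>R. card {y\<in>R. adj x y} \<le> 2 * r)"
      then have big: "\<forall>x\<in>R. 2 * r + 1 \<le> card {y\<in>R. adj x y}" by auto
      have "(2 * r + 1) * card R = (\<Sum>x\<in>R. 2 * r + 1)" by simp
      also have "\<dots> \<le> (\<Sum>x\<in>R. card {y\<in>R. adj x y})" by (rule sum_mono) (use big in auto)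
      also have "\<dots> = card (Sigma R (\<lambda>x. {y\<in>R. adj x y}))"
        using less.prems(1) by (simp add: card_SigmaI)
      also have "Sigma R (\<lambda>x. {y\<in>R. adj x y}) = {z \<in> R \<times> R. adj (fst z) (snd z)}" by auto
      also have "card \<dots> \<le> 2 * r * card R" using less.prems(2) by blast
      finally have "(2 * r + 1) * card R \<le> 2 * r * card R" .
      moreover have "0 < card R" using False less.prems(1) by (simp add: card_gt_0_iff)
      ultimately show False by simp
    qed
    then obtain x where x: "x \<in> R" "card {y\<in>R. adj x y} \<le> 2 * r" by blast
    define R' where "R' = R - insert x {y\<in>R. adj x y}"
    have R'sub: "R' \<subseteq> R" unfolding R'_def by blast
    have fR': "finite R'" using R'sub less.prems(1) finite_subset by blast
    have "card R' < card R"
      using x(1) less.prems(1) unfolding R'_def by (intro psubset_card_mono) auto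
    moreover have "\<forall>A\<subseteq>R'. card {z \<in> A \<times> A. adj (fst z) (snd z)} \<le> 2 * r * card A"
      using less.prems(2) R'sub by blast
    ultimately obtain I' where I': "I' \<subseteq> R'" "\<forall>x\<in>I'. \<forall>y\<in>I'. \<not> adj x y" "card R' \<le> (2 * r + 1) * card I'"
      using less.hyps[OF _ fR'] by blast
    define I where "I = insert x I'"
    have xI': "x \<notin> I'" using I'(1) unfolding R'_def by blast
    have fI': "finite I'" using I'(1) fR' finite_subset by blast
    have "I \<subseteq> R" unfolding I_def using I'(1) R'sub x(1) by blast
    moreover have "\<forall>u\<in>I. \<forall>v\<in>I. \<not> adj u v"
    proof (intro ballI)
      fix u v assume u: "u \<in> I" and v: "v \<in> I"
      show "\<not> adj u v"
      proof (cases "u = x")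
        case True
        show ?thesis
        proof (cases "v = x")
          case True
          then show ?thesis using \<open>u = x\<close> irr by simp
        next
          case False
          then have "v \<in> R'" using v I'(1) unfolding I_def by blast
          then show ?thesis using \<open>u = x\<close> unfolding R'_def by blast
        qed
      next
        case False
        then have uR: "u \<in> I'" using u unfolding I_def by blast
        show ?thesis
        proof (cases "v = x")
          case True
          have "u \<in> R'" using uR I'(1) by blast
          then have "\<not> adj x u" unfolding R'_def by blast
          then show ?thesis using True sym by blast
        next
          case False
          then have "v \<in> I'" using v unfolding I_def by blast
          then show ?thesis using uR I'(2) by blast
        qed
      qed
    qed
    moreover have "card R \<le> (2 * r + 1) * card I"
    proof -
      have "R \<subseteq> R' \<union> insert x {y\<in>R. adj x y}" unfolding R'_def by blast
      then have "card R \<le> card (R' \<union> insert x {y\<in>R. adj x y})"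
        using less.prems(1) fR' by (intro card_mono) auto
      also have "\<dots> \<le> card R' + card (insert x {y\<in>R. adj x y})" by (rule card_Un_le)
      also have "card (insert x {y\<in>R. adj x y}) \<le> Suc (card {y\<in>R. adj x y})" using less.prems(1) by (simp add: card_insert_if)
      also have "\<dots> \<le> 2 * r + 1" using x(2) by simp
      finally have "card R \<le> card R' + (2 * r + 1)" by simp
      also have "\<dots> \<le> (2 * r + 1) * card I' + (2 * r + 1)" using I'(3) by simp
      also have "\<dots> = (2 * r + 1) * card I" unfolding I_def using xI' fI' by simp
      finally show ?thesis .
    qed
    ultimately show ?thesis by blast
  qed
qed



lemma nb_sym:
  assumes "simple_graph V E" "x \<in> V" "v \<in> V"
  shows "x \<in> nbhd V E v \<longleftrightarrow> v \<in> nbhd V E x"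
  using assms unfolding simple_graph_def nbhd_def by auto

lemma nb_sub: "nbhd V E v \<subseteq> V" unfolding nbhd_def by auto

lemma reps:
  fixes f :: "'a \<Rightarrow> 'c"
  shows "\<exists>U'\<subseteq>U. inj_on f U' \<and> f ` U' = f ` U"
proof -
  define g where "g T = (SOME v. v \<in> U \<and> f v = T)" for T
  have g: "g T \<in> U \<and> f (g T) = T" if "T \<in> f ` U" for T
  proof -
    from that have "\<exists>v. v \<in> U \<and> f v = T" by blast
    then show ?thesis unfolding g_def by (rule someI_ex)
  qed
  define U' where "U' = g ` (f ` U)"
  have "U' \<subseteq> U" unfolding U'_def using g by blast
  moreover have "inj_on f U'"
  proof
    fix a b assume "a \<in> U'" "b \<in> U'" "f a = f b"
    then obtain Ta Tb where "Ta \<in> f ` U" "a = g Ta" "Tb \<in> f ` U" "b = g Tb" unfolding U'_def by blast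
    then show "a = b" using g \<open>f a = f b\<close> by metis
  qed
  moreover have "f ` U' = f ` U"
  proof
    show "f ` U' \<subseteq> f ` U" using \<open>U' \<subseteq> U\<close> by (rule image_mono)
    show "f ` U \<subseteq> f ` U'"
    proof
      fix T assume T: "T \<in> f ` U"
      then have "g T \<in> U'" unfolding U'_def by (rule imageI)
      moreover have "T = f (g T)" using g[OF T] by simp
      ultimately show "T \<in> f ` U'" by (rule rev_image_eqI)
    qed
  qed
  ultimately show ?thesis by blast
qed

lemma trace_factor:
  assumes "finite C"
  shows "card ((\<lambda>v. N v \<inter> (Z - W)) ` C) \<le> card ((\<lambda>v. N v \<inter> Z) ` C)"
proof -
  have "(\<lambda>v. N v \<inter> (Z - W)) ` C = (\<lambda>T. T - W) ` ((\<lambda>v. N v \<inter> Z) ` C)"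
    by (simp add: image_image Int_Diff)
  then show ?thesis using assms by (simp add: card_image_le)
qed

lemma pairs_bound:
  fixes A :: "'a::linorder set"
  assumes fA: "finite A" and inj: "inj_on g {z \<in> A \<times> A. adj (fst z) (snd z) \<and> fst z < snd z}"
    and sym: "\<And>x y. adj x y \<Longrightarrow> adj y x" and irr: "\<And>x. \<not> adj x x"
    and img: "g ` {z \<in> A \<times> A. adj (fst z) (snd z) \<and> fst z < snd z} \<subseteq> B" and fB: "finite B"
  shows "card {z \<in> A \<times> A. adj (fst z) (snd z)} \<le> 2 * card B"
proof -
  define P1 where "P1 = {z \<in> A \<times> A. adj (fst z) (snd z) \<and> fst z < snd z}"
  define P2 where "P2 = {z \<in> A \<times> A. adj (fst z) (snd z) \<and> snd z < fst z}"
  have fAA: "finite (A \<times> A)" using fA by simp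
  have "{z \<in> A \<times> A. adj (fst z) (snd z)} \<subseteq> P1 \<union> P2"
  proof
    fix z assume z: "z \<in> {z \<in> A \<times> A. adj (fst z) (snd z)}"
    then have "fst z \<noteq> snd z" using irr by (metis (mono_tags, lifting) mem_Collect_eq)
    then show "z \<in> P1 \<union> P2" using z unfolding P1_def P2_def by (auto simp: neq_iff)
  qed
  moreover have "finite (P1 \<union> P2)" unfolding P1_def P2_def using fAA by simp
  ultimately have "card {z \<in> A \<times> A. adj (fst z) (snd z)} \<le> card (P1 \<union> P2)" by (rule card_mono[rotated])
  also have "\<dots> \<le> card P1 + card P2" by (rule card_Un_le)
  also have "card P2 = card P1"
  proof -
    have "P2 = prod.swap ` P1"
    proof
      show "P2 \<subseteq> prod.swap ` P1"
      proof
        fix z assume "z \<in> P2"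
        then have "prod.swap z \<in> P1" unfolding P1_def P2_def using sym by (cases z) auto
        moreover have "z = prod.swap (prod.swap z)" by simp
        ultimately show "z \<in> prod.swap ` P1" by (rule rev_image_eqI)
      qed
      show "prod.swap ` P1 \<subseteq> P2" unfolding P1_def P2_def using sym by auto
    qed
    moreover have "inj_on prod.swap P1" by (rule inj_swap)
    ultimately show ?thesis by (simp add: card_image)
  qed
  also have "card P1 = card (g ` P1)" using inj unfolding P1_def by (simp add: card_image)
  also have "\<dots> \<le> card B" using img fB unfolding P1_def by (simp add: card_mono)
  finally show ?thesis by simp
qed



definition cA :: "nat \<Rightarrow> nat" where "cA R0 = R0 * (2 * R0 + 1)"
definition cc :: "nat \<Rightarrow> nat" where "cc R0 = 16 * R0 * R0 * cA R0 + 4 * cA R0"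

lemma both_in: "S \<subseteq> {x, y} \<Longrightarrow> x \<in> S \<Longrightarrow> y \<in> S \<Longrightarrow> S = {x, y}"
  by (rule subset_antisym) simp_all

lemma none_in: "S \<subseteq> {x, y} \<Longrightarrow> x \<notin> S \<Longrightarrow> y \<notin> S \<Longrightarrow> S = {}"
  by blast

lemma odd_two: "x \<noteq> y \<Longrightarrow> S \<subseteq> {x, y} \<Longrightarrow> odd (card S) \<Longrightarrow> (x \<in> S) \<noteq> (y \<in> S)"
proof (rule ccontr)
  assume a: "x \<noteq> y" "S \<subseteq> {x, y}" "odd (card S)" "\<not> (x \<in> S) \<noteq> (y \<in> S)"
  show False
  proof (cases "x \<in> S")
    case True
    then have "S = {x, y}" using a both_in by metis
    then show False using a by simp
  next
    case False
    then have "S = {}" using a none_in by metis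
    then show False using a by simp
  qed
qed

lemma even_two: "x \<noteq> y \<Longrightarrow> S \<subseteq> {x, y} \<Longrightarrow> S \<noteq> {} \<Longrightarrow> even (card S) \<Longrightarrow> S = {x, y}"
proof -
  assume a: "x \<noteq> y" "S \<subseteq> {x, y}" "S \<noteq> {}" "even (card S)"
  show "S = {x, y}"
  proof (cases "x \<in> S \<and> y \<in> S")
    case True
    then show ?thesis using a both_in by metis
  next
    case False
    then have "x \<notin> S \<or> y \<notin> S" by simp
    then have "S \<subseteq> {x} \<or> S \<subseteq> {y}" using a(2) by blast
    then have "S = {x} \<or> S = {y}" using a(3) by (metis subset_singletonD)
    then show ?thesis using a(4) by auto
  qed
qed



lemma structure_lemma:
  fixes V :: "'a::linorder set"
  assumes sg: "simple_graph V E"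
    and HT: "\<forall>A\<subseteq>V. A \<noteq> {} \<longrightarrow> card ((\<lambda>v. nbhd V E v \<inter> A) ` V) \<le> R0 * card A"
    and R0: "1 \<le> R0"
    and Z: "Z \<subseteq> V" and U: "U \<subseteq> V" and Une: "U \<noteq> {}"
    and ne: "\<forall>v\<in>U. nbhd V E v \<inter> Z \<noteq> {}"
  shows "\<exists>W. W \<subseteq> Z \<and> W \<noteq> {} \<and> (\<forall>v\<in>U. nbhd V E v \<inter> Z \<subseteq> W \<longrightarrow> odd (card (nbhd V E v \<inter> W)))
         \<and> card ((\<lambda>v. nbhd V E v \<inter> (Z - W)) ` {v\<in>U. odd (card (nbhd V E v \<inter> W))}) \<le> cc R0"
proof -
  define N where "N = nbhd V E"
  have fV: "finite V" using sg unfolding simple_graph_def by simp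
  have fZ: "finite Z" using Z fV finite_subset by blast
  have fU: "finite U" using U fV finite_subset by blast
  have Nsub: "N v \<subseteq> V" for v unfolding N_def by (rule nb_sub)
  have sym: "x \<in> N v \<longleftrightarrow> v \<in> N x" if "x \<in> V" "v \<in> V" for x v
    unfolding N_def using nb_sym[OF sg that] .
  have TBg: "card ((\<lambda>x. N x \<inter> A) ` I) \<le> R0 * card A" if "I \<subseteq> V" "A \<subseteq> V" "A \<noteq> {}" for I A
  proof -
    have "card ((\<lambda>x. N x \<inter> A) ` I) \<le> card ((\<lambda>x. N x \<inter> A) ` V)"
      using that(1) fV by (intro card_mono) auto
    also have "\<dots> \<le> R0 * card A" using HT that(2,3) unfolding N_def by blast
    finally show ?thesis .
  qed
  define TrU where "TrU = (\<lambda>v. N v \<inter> Z) ` U"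
  obtain v0 where v0: "v0 \<in> U" using Une by blast
  then obtain x0 where x0: "x0 \<in> N v0 \<inter> Z" using ne unfolding N_def by blast
  show ?thesis
  proof (cases "card TrU \<le> cc R0")
    case True
    define W where "W = {x0}"
    have "W \<subseteq> Z" "W \<noteq> {}" unfolding W_def using x0 by auto
    moreover have "\<forall>v\<in>U. N v \<inter> Z \<subseteq> W \<longrightarrow> odd (card (N v \<inter> W))"
    proof (intro ballI impI)
      fix v assume v: "v \<in> U" and sub: "N v \<inter> Z \<subseteq> W"
      have "N v \<inter> Z \<noteq> {}" using ne v unfolding N_def by blast
      then have "x0 \<in> N v" using sub unfolding W_def by blast
      then have "N v \<inter> W = {x0}" unfolding W_def by blast
      then show "odd (card (N v \<inter> W))" by simp
    qed
    moreover have "card ((\<lambda>v. N v \<inter> (Z - W)) ` {v\<in>U. odd (card (N v \<inter> W))}) \<le> cc R0"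
    proof -
      have fC: "finite {v\<in>U. odd (card (N v \<inter> W))}" using fU by simp
      have "card ((\<lambda>v. N v \<inter> (Z - W)) ` {v\<in>U. odd (card (N v \<inter> W))}) \<le> card ((\<lambda>v. N v \<inter> Z) ` {v\<in>U. odd (card (N v \<inter> W))})"
        by (rule trace_factor[OF fC])
      also have "\<dots> \<le> card TrU" unfolding TrU_def using fU by (intro card_mono) auto
      finally show ?thesis using True by simp
    qed
    ultimately show ?thesis unfolding N_def by blast
  next
    case False
    then have bigTr: "cc R0 < card TrU" by simp
    obtain U' where U': "U' \<subseteq> U" "inj_on (\<lambda>v. N v \<inter> Z) U'" "(\<lambda>v. N v \<inter> Z) ` U' = (\<lambda>v. N v \<inter> Z) ` U"
      using reps[of U "\<lambda>v. N v \<inter> Z"] by (elim exE conjE)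
    have U'V: "U' \<subseteq> V" using U'(1) U by blast
    have fU': "finite U'" using U'(1) fU finite_subset by blast
    have cardU': "card U' = card TrU" unfolding TrU_def using card_image[OF U'(2)] U'(3) by simp
    obtain R where R: "R \<subseteq> Z" "inj_on (\<lambda>x. N x \<inter> U') R" "(\<lambda>x. N x \<inter> U') ` R = (\<lambda>x. N x \<inter> U') ` Z"
      using reps[of Z "\<lambda>x. N x \<inter> U'"] by (elim exE conjE)
    have RV: "R \<subseteq> V" using R(1) Z by blast
    have fR: "finite R" using R(1) fZ finite_subset by blast
    have Rrep: "\<exists>x\<in>R. N x \<inter> U' = N z \<inter> U'" if "z \<in> Z" for z
    proof -
      have "N z \<inter> U' \<in> (\<lambda>x. N x \<inter> U') ` R" using R(3) that by blast
      then show ?thesis by (metis (no_types, lifting) imageE)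
    qed
    have Rne: "R \<noteq> {}" using Rrep x0 by blast
    have injR: "inj_on (\<lambda>v. N v \<inter> R) U'"
    proof
      fix v v' assume v: "v \<in> U'" and v': "v' \<in> U'" and eq: "N v \<inter> R = N v' \<inter> R"
      have "N v \<inter> Z = N v' \<inter> Z"
      proof (rule set_eqI)
        fix z
        show "z \<in> N v \<inter> Z \<longleftrightarrow> z \<in> N v' \<inter> Z"
        proof (cases "z \<in> Z")
          case True
          then obtain x where x: "x \<in> R" "N x \<inter> U' = N z \<inter> U'" using Rrep by blast
          have zV: "z \<in> V" "x \<in> V" using True Z x(1) RV by auto
          have vV: "v \<in> V" "v' \<in> V" using v v' U'V by auto
          have "z \<in> N v \<longleftrightarrow> v \<in> N z" using sym zV vV by blast
          also have "\<dots> \<longleftrightarrow> v \<in> N x" using x(2) v by blast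
          also have "\<dots> \<longleftrightarrow> x \<in> N v" using sym zV vV by blast
          also have "\<dots> \<longleftrightarrow> x \<in> N v'" using eq x(1) by blast
          also have "\<dots> \<longleftrightarrow> v' \<in> N x" using sym zV vV by blast
          also have "\<dots> \<longleftrightarrow> v' \<in> N z" using x(2) v' by blast
          also have "\<dots> \<longleftrightarrow> z \<in> N v'" using sym zV vV by blast
          finally show ?thesis using True by blast
        next
          case False
          then show ?thesis by blast
        qed
      qed
      then show "v = v'" using U'(2) v v' by (meson inj_onD)
    qed
    have cU'R: "card U' \<le> R0 * card R"
    proof -
      have "card U' = card ((\<lambda>v. N v \<inter> R) ` U')" using card_image[OF injR] by simp
      also have "\<dots> \<le> R0 * card R" using TBg[OF U'V RV Rne] .
      finally show ?thesis .
    qed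
    define adj where "adj x y \<longleftrightarrow> x \<noteq> y \<and> (\<exists>v\<in>U'. N v \<inter> Z = {x, y})" for x y
    have adj_sym: "adj x y \<Longrightarrow> adj y x" for x y unfolding adj_def by (metis insert_commute)
    have adj_irr: "\<not> adj x x" for x unfolding adj_def by simp
    have pb: "\<forall>A\<subseteq>R. card {z \<in> A \<times> A. adj (fst z) (snd z)} \<le> 2 * R0 * card A"
    proof (intro allI impI)
      fix A assume AR: "A \<subseteq> R"
      show "card {z \<in> A \<times> A. adj (fst z) (snd z)} \<le> 2 * R0 * card A"
      proof (cases "A = {}")
        case True
        then show ?thesis by simp
      next
        case False
        have fA: "finite A" using AR fR finite_subset by blast
        have AV: "A \<subseteq> V" using AR RV by blast
        have AZ: "A \<subseteq> Z" using AR R(1) by blast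
        define B where "B = (\<lambda>v. N v \<inter> A) ` V"
        have fB: "finite B" unfolding B_def using fV by simp
        have "card {z \<in> A \<times> A. adj (fst z) (snd z)} \<le> 2 * card B"
        proof (rule pairs_bound[OF fA _ adj_sym adj_irr _ fB, where g = "\<lambda>z. {fst z, snd z}"])
          show "inj_on (\<lambda>z. {fst z, snd z}) {z \<in> A \<times> A. adj (fst z) (snd z) \<and> fst z < snd z}"
          proof
            fix z z' assume z: "z \<in> {z \<in> A \<times> A. adj (fst z) (snd z) \<and> fst z < snd z}"
              and z': "z' \<in> {z \<in> A \<times> A. adj (fst z) (snd z) \<and> fst z < snd z}"
              and e: "{fst z, snd z} = {fst z', snd z'}"
            have l: "fst z < snd z" "fst z' < snd z'" using z z' by auto
            from e have "(fst z = fst z' \<and> snd z = snd z') \<or> (fst z = snd z' \<and> snd z = fst z')"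
              by (simp add: doubleton_eq_iff)
            then have "fst z = fst z' \<and> snd z = snd z'" using l by auto
            then show "z = z'" by (simp add: prod_eq_iff)
          qed
          show "(\<lambda>z. {fst z, snd z}) ` {z \<in> A \<times> A. adj (fst z) (snd z) \<and> fst z < snd z} \<subseteq> B"
          proof
            fix S assume "S \<in> (\<lambda>z. {fst z, snd z}) ` {z \<in> A \<times> A. adj (fst z) (snd z) \<and> fst z < snd z}"
            then obtain z where z: "z \<in> A \<times> A" "adj (fst z) (snd z)" "S = {fst z, snd z}" by blast
            then obtain v where v: "v \<in> U'" "N v \<inter> Z = {fst z, snd z}" unfolding adj_def by blast
            have "N v \<inter> A = {fst z, snd z}" using v(2) z(1) AZ by auto
            then have "S = N v \<inter> A" using z(3) by simp
            moreover have "v \<in> V" using v(1) U'V by blast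
            ultimately show "S \<in> B" unfolding B_def by (rule rev_image_eqI[rotated])
          qed
        qed
        also have "card B \<le> R0 * card A" unfolding B_def using TBg[of V A] AV False by simp
        then have "2 * card B \<le> 2 * R0 * card A" by simp
        finally show ?thesis .
      qed
    qed
    obtain I where I: "I \<subseteq> R" "\<forall>x\<in>I. \<forall>y\<in>I. \<not> adj x y" "card R \<le> (2 * R0 + 1) * card I"
      using indep_set[OF adj_sym adj_irr fR pb] by blast
    have IV: "I \<subseteq> V" using I(1) RV by blast
    have fI: "finite I" using I(1) fR finite_subset by blast
    have NM: "card U' \<le> cA R0 * card I"
    proof -
      have "card U' \<le> R0 * card R" by (rule cU'R)
      also have "\<dots> \<le> R0 * ((2 * R0 + 1) * card I)" using I(3) by simp
      also have "\<dots> = cA R0 * card I" unfolding cA_def by (simp only: mult.assoc)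
      finally show ?thesis .
    qed
    have cA1: "1 \<le> cA R0" unfolding cA_def using R0 by simp
    have I5: "\<not> card I \<le> 4"
    proof
      assume "card I \<le> 4"
      then have "card U' \<le> cA R0 * 4" using NM by (meson le_trans mult_le_mono2)
      then have "card U' \<le> cc R0" unfolding cc_def by simp
      then show False using bigTr cardU' by simp
    qed
    have "\<not> (\<forall>x\<in>I. \<forall>y\<in>I. x \<noteq> y \<longrightarrow> 16 * R0 * R0 * cA R0 \<le> card (((N x - N y) \<union> (N y - N x)) \<inter> U'))"
    proof
      assume dist: "\<forall>x\<in>I. \<forall>y\<in>I. x \<noteq> y \<longrightarrow> 16 * R0 * R0 * cA R0 \<le> card (((N x - N y) \<union> (N y - N x)) \<inter> U')"
      have TB': "\<forall>A\<subseteq>U'. A \<noteq> {} \<longrightarrow> card ((\<lambda>x. N x \<inter> A) ` I) \<le> R0 * card A"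
        using TBg IV U'V by blast
      have "card I \<le> 4" by (rule haussler[OF fI fU' TB' R0 cA1 NM dist])
      then show False using I5 by simp
    qed
    then obtain x y where xy: "x \<in> I" "y \<in> I" "x \<noteq> y"
      and close: "card (((N x - N y) \<union> (N y - N x)) \<inter> U') < 16 * R0 * R0 * cA R0" by auto
    define W where "W = {x, y}"
    have WZ: "W \<subseteq> Z" unfolding W_def using xy I(1) R(1) by blast
    have "W \<noteq> {}" unfolding W_def by simp
    have trrep: "\<exists>v'\<in>U'. N v' \<inter> Z = N v \<inter> Z" if "v \<in> U" for v
    proof -
      have "N v \<inter> Z \<in> (\<lambda>v. N v \<inter> Z) ` U'" using U'(3) that by blast
      then show ?thesis by (metis (no_types, lifting) imageE)
    qed
    have a: "\<forall>v\<in>U. N v \<inter> Z \<subseteq> W \<longrightarrow> odd (card (N v \<inter> W))"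
    proof (intro ballI impI)
      fix v assume v: "v \<in> U" and sub: "N v \<inter> Z \<subseteq> W"
      show "odd (card (N v \<inter> W))"
      proof (rule ccontr)
        assume ev: "\<not> odd (card (N v \<inter> W))"
        have eqW: "N v \<inter> W = N v \<inter> Z" using sub WZ by blast
        have "N v \<inter> Z \<noteq> {}" using ne v unfolding N_def by blast
        then have "N v \<inter> W = {x, y}"
          using even_two[OF xy(3), of "N v \<inter> W"] eqW ev unfolding W_def by auto
        then have "N v \<inter> Z = {x, y}" using eqW by simp
        then obtain v' where "v' \<in> U'" "N v' \<inter> Z = {x, y}" using trrep[OF v] by auto
        then have "adj x y" unfolding adj_def using xy(3) by blast
        then show False using I(2) xy by blast
      qed
    qed
    define C where "C = {v\<in>U. odd (card (N v \<inter> W))}"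
    have fC: "finite C" unfolding C_def using fU by simp
    have "(\<lambda>v. N v \<inter> Z) ` C \<subseteq> (\<lambda>v. N v \<inter> Z) ` (((N x - N y) \<union> (N y - N x)) \<inter> U')"
    proof
      fix T assume "T \<in> (\<lambda>v. N v \<inter> Z) ` C"
      then obtain v where v: "v \<in> C" "T = N v \<inter> Z" by blast
      then have vU: "v \<in> U" and od: "odd (card (N v \<inter> W))" unfolding C_def by auto
      obtain v' where v': "v' \<in> U'" "N v' \<inter> Z = N v \<inter> Z" using trrep[OF vU] by blast
      have "N v \<inter> W = N v' \<inter> W" using v'(2) WZ by blast
      then have "odd (card (N v' \<inter> W))" using od by simp
      then have "(x \<in> N v' \<inter> W) \<noteq> (y \<in> N v' \<inter> W)"
        using odd_two[OF xy(3), of "N v' \<inter> W"] unfolding W_def by auto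
      then have "(x \<in> N v') \<noteq> (y \<in> N v')" unfolding W_def by simp
      moreover have "x \<in> V" "y \<in> V" "v' \<in> V" using xy IV v'(1) U'V by auto
      ultimately have "(v' \<in> N x) \<noteq> (v' \<in> N y)" using sym by metis
      then have "v' \<in> ((N x - N y) \<union> (N y - N x)) \<inter> U'" using v'(1) by blast
      moreover have "T = N v' \<inter> Z" using v(2) v'(2) by simp
      ultimately show "T \<in> (\<lambda>v. N v \<inter> Z) ` (((N x - N y) \<union> (N y - N x)) \<inter> U')" by (rule rev_image_eqI)
    qed
    then have "card ((\<lambda>v. N v \<inter> Z) ` C) \<le> card ((\<lambda>v. N v \<inter> Z) ` (((N x - N y) \<union> (N y - N x)) \<inter> U'))"
      using fU' by (intro card_mono) auto
    also have "\<dots> \<le> card (((N x - N y) \<union> (N y - N x)) \<inter> U')" by (rule card_image_le) (use fU' in simp)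
    also have "\<dots> \<le> cc R0" using close unfolding cc_def by simp
    finally have b: "card ((\<lambda>v. N v \<inter> (Z - W)) ` C) \<le> cc R0"
      using trace_factor[OF fC, of N Z W] by simp
    show ?thesis using WZ \<open>W \<noteq> {}\<close> a b unfolding C_def N_def by blast
  qed
qed



lemma bits_inj: "inj (\<lambda>a::nat. {j. bit a j})"
proof
  fix a b :: nat assume "{j. bit a j} = {j. bit b j}"
  then have "\<forall>n. bit a n \<longleftrightarrow> bit b n" by (simp add: set_eq_iff)
  then show "a = b" by (simp add: bit_eq_iff)
qed

lemma peel:
  fixes V :: "'a::linorder set"
  assumes sg: "simple_graph V E"
    and HT: "\<forall>A\<subseteq>V. A \<noteq> {} \<longrightarrow> card ((\<lambda>v. nbhd V E v \<inter> A) ` V) \<le> R0 * card A"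
    and R0: "1 \<le> R0" and ct: "cc R0 < 2 ^ t"
  shows "Z \<subseteq> V \<Longrightarrow> U \<subseteq> V \<Longrightarrow> \<forall>v\<in>U. nbhd V E v \<inter> Z \<noteq> {} \<Longrightarrow>
    \<exists>\<phi>. (\<forall>u. \<phi> u < (2::nat) ^ t) \<and> (\<forall>v\<in>U. \<exists>j. odd (card {u \<in> nbhd V E v \<inter> Z. bit (\<phi> u) j}))"
proof (induction "card Z" arbitrary: Z U rule: less_induct)
  case less
  define N where "N = nbhd V E"
  have fV: "finite V" using sg unfolding simple_graph_def by simp
  have fZ: "finite Z" using less.prems(1) fV finite_subset by blast
  show ?case
  proof (cases "U = {}")
    case True
    then show ?thesis by (intro exI[of _ "\<lambda>_. 0"]) simp
  next
    case False
    obtain W where W: "W \<subseteq> Z" "W \<noteq> {}"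
      "\<forall>v\<in>U. N v \<inter> Z \<subseteq> W \<longrightarrow> odd (card (N v \<inter> W))"
      "card ((\<lambda>v. N v \<inter> (Z - W)) ` {v\<in>U. odd (card (N v \<inter> W))}) \<le> cc R0"
      using structure_lemma[OF sg HT R0 less.prems(1) less.prems(2) False less.prems(3)]
      unfolding N_def by blast
    define Z' where "Z' = Z - W"
    define U' where "U' = {v\<in>U. even (card (N v \<inter> W))}"
    define C where "C = {v\<in>U. odd (card (N v \<inter> W))}"
    have "Z - W \<subset> Z" using W(1,2) by blast
    then have lt: "card Z' < card Z" unfolding Z'_def by (rule psubset_card_mono[OF fZ])
    have ne': "\<forall>v\<in>U'. nbhd V E v \<inter> Z' \<noteq> {}"
    proof
      fix v assume v: "v \<in> U'"
      show "nbhd V E v \<inter> Z' \<noteq> {}"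
      proof
        assume "nbhd V E v \<inter> Z' = {}"
        then have "N v \<inter> Z \<subseteq> W" unfolding Z'_def N_def by blast
        then have "odd (card (N v \<inter> W))" using W(3) v unfolding U'_def by blast
        then show False using v unfolding U'_def by simp
      qed
    qed
    obtain \<phi>' where \<phi>': "\<forall>u. \<phi>' u < (2::nat) ^ t" "\<forall>v\<in>U'. \<exists>j. odd (card {u \<in> nbhd V E v \<inter> Z'. bit (\<phi>' u) j})"
    proof -
      have "Z' \<subseteq> V" unfolding Z'_def using less.prems(1) by blast
      moreover have "U' \<subseteq> V" unfolding U'_def using less.prems(2) by blast
      ultimately show ?thesis using less.hyps[OF lt _ _ ne'] that by blast
    qed
    define pv where "pv S = {j. odd (card {u\<in>S. bit (\<phi>' u) j})}" for S
    define Forb where "Forb = (\<lambda>v. pv (N v \<inter> Z')) ` C"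
    have "C \<subseteq> V" unfolding C_def using less.prems(2) by blast
    then have fC: "finite C" using fV by (rule finite_subset)
    have cF: "card Forb \<le> cc R0"
    proof -
      have "Forb = pv ` ((\<lambda>v. N v \<inter> Z') ` C)" unfolding Forb_def by (simp add: image_image)
      then have "card Forb \<le> card ((\<lambda>v. N v \<inter> Z') ` C)" using fC by (simp add: card_image_le)
      also have "\<dots> \<le> cc R0" using W(4) unfolding Z'_def C_def .
      finally show ?thesis .
    qed
    have "\<exists>a\<in>{0..<(2::nat) ^ t}. {j. bit a j} \<notin> Forb"
    proof (rule ccontr)
      assume "\<not> (\<exists>a\<in>{0..<(2::nat) ^ t}. {j. bit a j} \<notin> Forb)"
      then have sub: "(\<lambda>a::nat. {j. bit a j}) ` {0..<2 ^ t} \<subseteq> Forb" by blast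
      have fF: "finite Forb" unfolding Forb_def using fC by simp
      have "2 ^ t = card ((\<lambda>a::nat. {j. bit a j}) ` {0..<2 ^ t})"
        using card_image[OF inj_on_subset[OF bits_inj subset_UNIV]] by simp
      also have "\<dots> \<le> card Forb" using sub fF by (rule card_mono[rotated])
      finally show False using cF ct by simp
    qed
    then obtain a :: nat where a: "a < 2 ^ t" "{j. bit a j} \<notin> Forb" by auto
    define \<phi> where "\<phi> u = (if u \<in> W then a else \<phi>' u)" for u
    have bound: "\<forall>u. \<phi> u < 2 ^ t" unfolding \<phi>_def using a(1) \<phi>'(1) by simp
    have split: "card {u \<in> N v \<inter> Z. bit (\<phi> u) j} = (if bit a j then card (N v \<inter> W) else 0) + card {u \<in> N v \<inter> Z'. bit (\<phi>' u) j}" for v j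
    proof -
      have fin: "finite (N v \<inter> Z)" using fZ by simp
      have e: "{u \<in> N v \<inter> Z. bit (\<phi> u) j} = {u \<in> N v \<inter> W. bit a j} \<union> {u \<in> N v \<inter> Z'. bit (\<phi>' u) j}"
        unfolding \<phi>_def Z'_def using W(1) by auto
      have d: "{u \<in> N v \<inter> W. bit a j} \<inter> {u \<in> N v \<inter> Z'. bit (\<phi>' u) j} = {}" unfolding Z'_def by blast
      have f1: "finite {u \<in> N v \<inter> W. bit a j}" using fZ W(1) finite_subset by (metis (no_types, lifting) Int_iff finite_Int mem_Collect_eq subsetI)
      have f2: "finite {u \<in> N v \<inter> Z'. bit (\<phi>' u) j}" using fZ unfolding Z'_def by simp
      have "card {u \<in> N v \<inter> Z. bit (\<phi> u) j} = card {u \<in> N v \<inter> W. bit a j} + card {u \<in> N v \<inter> Z'. bit (\<phi>' u) j}"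
        unfolding e using card_Un_disjoint[OF f1 f2 d] .
      moreover have "{u \<in> N v \<inter> W. bit a j} = (if bit a j then N v \<inter> W else {})" by (simp add: Int_def)
      then have "card {u \<in> N v \<inter> W. bit a j} = (if bit a j then card (N v \<inter> W) else 0)" by simp
      ultimately show ?thesis by simp
    qed
    have "\<forall>v\<in>U. \<exists>j. odd (card {u \<in> nbhd V E v \<inter> Z. bit (\<phi> u) j})"
    proof
      fix v assume v: "v \<in> U"
      show "\<exists>j. odd (card {u \<in> nbhd V E v \<inter> Z. bit (\<phi> u) j})"
      proof (cases "even (card (N v \<inter> W))")
        case True
        then have "v \<in> U'" unfolding U'_def using v by simp
        then obtain j where j: "odd (card {u \<in> N v \<inter> Z'. bit (\<phi>' u) j})" using \<phi>'(2) unfolding N_def by blast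
        have "odd (card {u \<in> N v \<inter> Z. bit (\<phi> u) j})" unfolding split using True j by simp
        then show ?thesis unfolding N_def by blast
      next
        case False
        then have "v \<in> C" unfolding C_def using v by simp
        then have "{j. bit a j} \<noteq> pv (N v \<inter> Z')" using a(2) unfolding Forb_def by blast
        then obtain j where j: "bit a j \<noteq> odd (card {u \<in> N v \<inter> Z'. bit (\<phi>' u) j})"
          unfolding pv_def by blast
        have "odd (card {u \<in> N v \<inter> Z. bit (\<phi> u) j})" unfolding split using False j by auto
        then show ?thesis unfolding N_def by blast
      qed
    qed
    then show ?thesis using bound by blast
  qed
qed

lemma color_from_bits:
  assumes fS: "finite S" and bd: "\<forall>u\<in>S. \<phi> u < (k::nat)" and od: "odd (card {u\<in>S. bit (\<phi> u) j})"
  shows "\<exists>i<k. odd (card {u\<in>S. \<phi> u = i})"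
proof (rule ccontr)
  assume "\<not> (\<exists>i<k. odd (card {u\<in>S. \<phi> u = i}))"
  then have ev: "\<forall>i\<in>{i\<in>{0..<k}. bit i j}. even (card {u\<in>S. \<phi> u = i})" by auto
  have e: "{u\<in>S. bit (\<phi> u) j} = (\<Union>i\<in>{i\<in>{0..<k}. bit i j}. {u\<in>S. \<phi> u = i})"
    using bd by auto
  have "card {u\<in>S. bit (\<phi> u) j} = (\<Sum>i\<in>{i\<in>{0..<k}. bit i j}. card {u\<in>S. \<phi> u = i})"
    unfolding e by (rule card_UN_disjoint) (use fS in auto)
  also have "even \<dots>" using ev by (intro dvd_sum) simp
  finally show False using od by simp
qed



lemma HT_from:
  assumes sg: "simple_graph V E"
    and cond: "\<forall>m::nat. m > 0 \<longrightarrow> int (nbhd_complexity V E m) \<le> r * int m"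
  shows "\<forall>A\<subseteq>V. A \<noteq> {} \<longrightarrow> card ((\<lambda>v. nbhd V E v \<inter> A) ` V) \<le> max 1 (nat r) * card A"
proof (intro allI impI)
  fix A assume A: "A \<subseteq> V" and Ane: "A \<noteq> {}"
  have fV: "finite V" using sg unfolding simple_graph_def by simp
  have fA: "finite A" using A fV finite_subset by blast
  have pos: "card A > 0" using fA Ane by (simp add: card_gt_0_iff)
  define S where "S = {card ((\<lambda>v. nbhd V E v \<inter> B) ` V) | B. B \<subseteq> V \<and> card B = card A}"
  have fS: "finite S" unfolding S_def
    by (rule finite_image_set) (rule finite_subset[of _ "Pow V"], auto simp: fV)
  have mem: "card ((\<lambda>v. nbhd V E v \<inter> A) ` V) \<in> S" unfolding S_def using A by blast
  have "card ((\<lambda>v. nbhd V E v \<inter> A) ` V) \<le> Sup S" by (rule le_cSup_finite[OF fS mem])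
  also have "Sup S = nbhd_complexity V E (card A)" unfolding S_def nbhd_complexity_def by simp
  finally have le1: "int (card ((\<lambda>v. nbhd V E v \<inter> A) ` V)) \<le> int (nbhd_complexity V E (card A))" by simp
  also have "\<dots> \<le> r * int (card A)" using cond pos by blast
  also have "\<dots> \<le> int (max 1 (nat r)) * int (card A)" by (intro mult_right_mono) auto
  finally have "int (card ((\<lambda>v. nbhd V E v \<inter> A) ` V)) \<le> int (max 1 (nat r) * card A)" by simp
  then show "card ((\<lambda>v. nbhd V E v \<inter> A) ` V) \<le> max 1 (nat r) * card A" by linarith
qed

theorem theorem1p2:
  shows "\<forall>r::int. \<exists>k::nat. \<forall>(V::nat set) E.
    simple_graph V E \<and> (\<forall>m::nat. m > 0 \<longrightarrow> int (nbhd_complexity V E m) \<le> r * int m)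
    \<longrightarrow> (\<exists>c::nat \<Rightarrow> nat. (\<forall>v\<in>V. c v < k) \<and>
          (\<forall>v\<in>V. nbhd V E v \<noteq> {} \<longrightarrow>
             (\<exists>i<k. odd (card {u \<in> nbhd V E v. c u = i}))))"
proof
  fix r :: int
  define R0 where "R0 = max 1 (nat r)"
  define t where "t = cc R0"
  have R0: "1 \<le> R0" unfolding R0_def by simp
  have ct: "cc R0 < 2 ^ t" unfolding t_def by (rule less_exp)
  show "\<exists>k::nat. \<forall>(V::nat set) E.
    simple_graph V E \<and> (\<forall>m::nat. m > 0 \<longrightarrow> int (nbhd_complexity V E m) \<le> r * int m)
    \<longrightarrow> (\<exists>c::nat \<Rightarrow> nat. (\<forall>v\<in>V. c v < k) \<and>
          (\<forall>v\<in>V. nbhd V E v \<noteq> {} \<longrightarrow>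
             (\<exists>i<k. odd (card {u \<in> nbhd V E v. c u = i}))))"
  proof (rule exI[of _ "2 ^ t"], intro allI impI)
    fix V :: "nat set" and E
    assume H: "simple_graph V E \<and> (\<forall>m::nat. m > 0 \<longrightarrow> int (nbhd_complexity V E m) \<le> r * int m)"
    then have sg: "simple_graph V E" and cond: "\<forall>m::nat. m > 0 \<longrightarrow> int (nbhd_complexity V E m) \<le> r * int m" by auto
    have fV: "finite V" using sg unfolding simple_graph_def by simp
    have HT: "\<forall>A\<subseteq>V. A \<noteq> {} \<longrightarrow> card ((\<lambda>v. nbhd V E v \<inter> A) ` V) \<le> R0 * card A"
      unfolding R0_def by (rule HT_from[OF sg cond])
    define U where "U = {v\<in>V. nbhd V E v \<noteq> {}}"
    have NV: "nbhd V E v \<inter> V = nbhd V E v" for v using nb_sub[of V E v] by blast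
    have ne: "\<forall>v\<in>U. nbhd V E v \<inter> V \<noteq> {}" unfolding U_def NV by simp
    obtain \<phi> where \<phi>: "\<forall>u. \<phi> u < (2::nat) ^ t" "\<forall>v\<in>U. \<exists>j. odd (card {u \<in> nbhd V E v \<inter> V. bit (\<phi> u) j})"
      using peel[OF sg HT R0 ct, of V U] ne unfolding U_def by blast
    show "\<exists>c::nat \<Rightarrow> nat. (\<forall>v\<in>V. c v < 2 ^ t) \<and>
          (\<forall>v\<in>V. nbhd V E v \<noteq> {} \<longrightarrow> (\<exists>i<2 ^ t. odd (card {u \<in> nbhd V E v. c u = i})))"
    proof (rule exI[of _ \<phi>], intro conjI ballI impI)
      fix v assume "v \<in> V"
      then show "\<phi> v < 2 ^ t" using \<phi>(1) by simp
    next
      fix v assume v: "v \<in> V" "nbhd V E v \<noteq> {}"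
      then have "v \<in> U" unfolding U_def by simp
      then obtain j where j: "odd (card {u \<in> nbhd V E v. bit (\<phi> u) j})" using \<phi>(2) unfolding NV by blast
      have fN: "finite (nbhd V E v)" using fV nb_sub finite_subset by metis
      show "\<exists>i<2 ^ t. odd (card {u \<in> nbhd V E v. \<phi> u = i})"
        by (rule color_from_bits[OF fN _ j]) (use \<phi>(1) in simp)
    qed
  qed
qed


end
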